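(* Let $A_1,\ldots,A_d$ be Hermitian $n\times n$ matrices such that the quadric $M_H=\{\Re e\, w_j={}^t\bar zA_jz,\ j=1,\dots,d\}\subset\mathbb C^{n+d}$ is strongly pseudoconvex, and let $b\in\mathbb R^d$ with $\sum_j b_jA_j$ invertible. For $a\in\mathbb C^d$ near $0$ put $P(a)=\sum_{j}a_jA_j$, $A(a)=\sum_j(b_j-a_j-\overline{a_j})A_j$, and let $X(a)$ be the unique $n\times n$ matrix with $\|X(a)\|<1$ solving $$P(a)X^2+A(a)X+{}^t\overline{P(a)}=0.$$ Let $a_0\in\mathbb R^d$ be small enough, and assume coordinates are chosen (by a linear change) so that $A(a_0)=\sum_j(b_j-2a_{0,j})A_j=I$. Write $P=P(a_0)$, $X=X(a_0)$ and let $\varphi:\mathcal M_n(\mathbb C)\to\mathcal M_n(\mathbb C)$, $\varphi(N)=N+P(NX+XN)$ (which is invertible for $a_0$ small). Then for every $s=1,\ldots,d$, $$\frac{\partial X}{\partial\,\Re e\, a_s}(a_0)=\varphi^{-1}\big(-A_s(I-X)^2\big)=-\varphi^{-1}(A_s)(I-X)^2.$$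
   Context: $M_H$ strongly pseudoconvex means there is $c\in\mathbb R^d$ with $\sum_j c_jA_j$ positive definite. $\mathcal M_n(\mathbb C)$ denotes complex $n\times n$ matrices. *)

theory Defs
  imports "HOL-Analysis.Analysis"
begin

definition cscale :: "complex \<Rightarrow> complex^'n^'m \<Rightarrow> complex^'n^'m" where
  "cscale c M = (\<chi> i j. c * M $ i $ j)"

definition adj :: "complex^'n^'m \<Rightarrow> complex^'m^'n" where
  "adj M = (\<chi> i j. cnj (M $ j $ i))"

definition hermitian :: "complex^'n^'n \<Rightarrow> bool" where
  "hermitian M \<longleftrightarrow> adj M = M"

definition herm_form :: "complex^'n^'n \<Rightarrow> complex^'n \<Rightarrow> complex" where
  "herm_form M v = (\<Sum>i\<in>UNIV. cnj (v $ i) * (M *v v) $ i)"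

definition pos_def :: "complex^'n^'n \<Rightarrow> bool" where
  "pos_def M \<longleftrightarrow> hermitian M \<and> (\<forall>v. v \<noteq> 0 \<longrightarrow> 0 < Re (herm_form M v))"

definition strongly_pseudoconvex :: "('d::finite \<Rightarrow> complex^'n^'n) \<Rightarrow> bool" where
  "strongly_pseudoconvex A \<longleftrightarrow>
     (\<exists>c::real^'d. pos_def (\<Sum>j\<in>UNIV. cscale (complex_of_real (c $ j)) (A j)))"

definition opnorm :: "complex^'n^'n \<Rightarrow> real" where
  "opnorm X = onorm (\<lambda>v. X *v v)"

definition Pm :: "('d::finite \<Rightarrow> complex^'n^'n) \<Rightarrow> complex^'d \<Rightarrow> complex^'n^'n" where
  "Pm A a = (\<Sum>j\<in>UNIV. cscale (a $ j) (A j))"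

definition Am :: "('d::finite \<Rightarrow> complex^'n^'n) \<Rightarrow> real^'d \<Rightarrow> complex^'d \<Rightarrow> complex^'n^'n" where
  "Am A b a = (\<Sum>j\<in>UNIV. cscale (complex_of_real (b $ j) - a $ j - cnj (a $ j)) (A j))"

definition Xsol :: "('d::finite \<Rightarrow> complex^'n^'n) \<Rightarrow> real^'d \<Rightarrow> complex^'d \<Rightarrow> complex^'n^'n" where
  "Xsol A b a = (THE X. opnorm X < 1 \<and>
       Pm A a ** X ** X + Am A b a ** X + adj (Pm A a) = 0)"

definition cvec :: "real^'d \<Rightarrow> complex^'d" where
  "cvec r = (\<chi> j. complex_of_real (r $ j))"

end

theory Submission
  imports Defs
begin

lemma mm_radd: "((A::'a::semiring_1^'n^'m) + B) ** C = A ** C + B ** C"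
  by (vector matrix_matrix_mult_def sum.distrib[symmetric] field_simps)
lemma mm_rdiff: "((A::'a::ring_1^'n^'m) - B) ** C = A ** C - B ** C"
  by (vector matrix_matrix_mult_def sum_subtractf left_diff_distrib)
lemma mm_ldiff: "(A::'a::ring_1^'n^'m) ** (B - C) = A ** B - A ** C"
  by (vector matrix_matrix_mult_def sum_subtractf right_diff_distrib)
lemma mm_lneg: "(- (A::'a::ring_1^'n^'m)) ** B = - (A ** B)"
  by (vector matrix_matrix_mult_def sum_negf)
lemma mm_rneg: "(A::'a::ring_1^'n^'m) ** (- B) = - (A ** B)"
  by (vector matrix_matrix_mult_def sum_negf)

lemmas mm_simps = matrix_add_ldistrib mm_radd mm_rdiff mm_ldiff mm_lneg mm_rneg
  matrix_mul_assoc scalar_matrix_assoc[symmetric] matrix_scalar_ac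

lemma norm_sum_le_vec: "norm (x::'a::real_normed_vector^'n) \<le> (\<Sum>i\<in>UNIV. norm (x$i))"
  unfolding norm_vec_def by (rule L2_set_le_sum) auto

lemma norm_scale_vec: "norm (\<chi> j. (c::complex) * v$j) = norm c * norm (v::complex^'n)"
  unfolding norm_vec_def by (simp add: norm_mult L2_set_right_distrib)

lemma norm_row_bound:
  fixes c :: "'k::finite \<Rightarrow> complex" and w :: "complex^'p^'k"
  shows "norm (\<chi> j. \<Sum>k\<in>UNIV. c k * w$k$j) \<le> L2_set (\<lambda>k. norm (c k)) UNIV * norm w"
proof -
  have "(\<chi> j. \<Sum>k\<in>UNIV. c k * w$k$j) = (\<Sum>k\<in>UNIV. (\<chi> j. c k * w$k$j))"
    by (simp add: vec_eq_iff sum_component)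
  also have "norm \<dots> \<le> (\<Sum>k\<in>UNIV. norm (\<chi> j. c k * w$k$j))" by (rule norm_sum)
  also have "\<dots> = (\<Sum>k\<in>UNIV. \<bar>norm (c k)\<bar> * \<bar>norm (w$k)\<bar>)"
    by (simp add: norm_scale_vec)
  also have "\<dots> \<le> L2_set (\<lambda>k. norm (c k)) UNIV * L2_set (\<lambda>k. norm (w$k)) UNIV"
    by (rule L2_set_mult_ineq)
  finally show ?thesis by (simp add: norm_vec_def)
qed

lemma norm_mm: "norm ((M::complex^'n^'m) ** (N::complex^'p^'n)) \<le> norm M * norm N"
proof -
  have r: "norm ((M ** N)$i) \<le> norm (M$i) * norm N" for i
  proof -
    have "(M ** N)$i = (\<chi> j. \<Sum>k\<in>UNIV. M$i$k * N$k$j)" by (simp add: matrix_matrix_mult_def)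
    then show ?thesis using norm_row_bound[of "\<lambda>k. M$i$k" N] by (simp add: norm_vec_def)
  qed
  have "norm (M ** N) = L2_set (\<lambda>i. norm ((M ** N)$i)) UNIV" by (simp add: norm_vec_def)
  also have "\<dots> \<le> L2_set (\<lambda>i. norm N * norm (M$i)) UNIV"
    by (rule L2_set_mono) (use r in \<open>auto simp: mult.commute\<close>)
  also have "\<dots> = norm N * norm M" by (simp add: L2_set_right_distrib[symmetric] norm_vec_def)
  finally show ?thesis by (simp add: mult.commute)
qed

lemma norm_mv: "norm ((M::complex^'n^'m) *v v) \<le> norm M * norm v"
proof -
  have r: "norm ((M *v v)$i) \<le> norm (M$i) * norm v" for i
  proof -
    have "norm ((M *v v)$i) = norm (\<Sum>j\<in>UNIV. M$i$j * v$j)" by (simp add: matrix_vector_mult_def)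
    also have "\<dots> \<le> (\<Sum>j\<in>UNIV. \<bar>norm (M$i$j)\<bar> * \<bar>norm (v$j)\<bar>)"
      by (rule order_trans[OF norm_sum]) (simp add: norm_mult)
    also have "\<dots> \<le> L2_set (\<lambda>j. norm (M$i$j)) UNIV * L2_set (\<lambda>j. norm (v$j)) UNIV"
      by (rule L2_set_mult_ineq)
    finally show ?thesis by (simp add: norm_vec_def)
  qed
  have "norm (M *v v) = L2_set (\<lambda>i. norm ((M *v v)$i)) UNIV" by (simp add: norm_vec_def)
  also have "\<dots> \<le> L2_set (\<lambda>i. norm v * norm (M$i)) UNIV"
    by (rule L2_set_mono) (use r in \<open>auto simp: mult.commute\<close>)
  also have "\<dots> = norm v * norm M" by (simp add: L2_set_right_distrib[symmetric] norm_vec_def)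
  finally show ?thesis by (simp add: mult.commute)
qed

lemma bl_mv: "bounded_linear (\<lambda>v. (M::complex^'n^'m) *v v)"
proof (rule bounded_linear_intro[where K="norm M"])
  show "M *v (x + y) = M *v x + M *v y" for x y by (rule matrix_vector_right_distrib)
  show "M *v (r *\<^sub>R x) = r *\<^sub>R (M *v x)" for r x
    by (simp add: vec_eq_iff matrix_vector_mult_def scaleR_sum_right)
  show "norm (M *v x) \<le> norm x * norm M" for x using norm_mv[of M x] by (simp add: mult.commute)
qed

lemma opnorm_le: "opnorm (M::complex^'n^'n) \<le> norm M"
  unfolding opnorm_def by (rule onorm_le) (simp add: norm_mv)

lemma norm_le_opnorm: "norm (M::complex^'n^'n) \<le> real (CARD('n))^2 * opnorm M"
proof -
  have e: "norm (M$i$j) \<le> opnorm M" for i j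
  proof -
    have "M$i$j = (M *v axis j 1)$i"
      by (simp add: matrix_vector_mult_def axis_def if_distrib cong: if_cong)
    then have "norm (M$i$j) \<le> norm (M *v axis j 1)" by (simp add: Finite_Cartesian_Product.norm_nth_le)
    also have "\<dots> \<le> opnorm M * norm (axis j (1::complex))"
      unfolding opnorm_def by (rule onorm[OF bl_mv])
    finally show ?thesis by simp
  qed
  have "norm M \<le> (\<Sum>i\<in>UNIV. norm (M$i))" by (rule norm_sum_le_vec)
  also have "\<dots> \<le> (\<Sum>i\<in>(UNIV::'n set). \<Sum>j\<in>(UNIV::'n set). opnorm M)"
    by (rule sum_mono, rule order_trans[OF norm_sum_le_vec], rule sum_mono, rule e)
  also have "\<dots> = real (CARD('n))^2 * opnorm M" by (simp add: power2_eq_square)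
  finally show ?thesis .
qed

lemma norm_mm3: "norm ((P::complex^'n^'n) ** X ** Y) \<le> norm P * norm X * norm Y"
  by (rule order_trans[OF norm_mm]) (simp add: mult_right_mono norm_mm)

lemma F_lip:
  fixes P E P' X Y :: "complex^'n::finite^'n"
  assumes "norm P \<le> d" "norm E \<le> d"
  shows "norm ((- (P ** X ** X + E ** X + P')) - (- (P ** Y ** Y + E ** Y + P')))
     \<le> d * (norm X + norm Y + 1) * norm (X - Y)"
proof -
  have "(- (P ** X ** X + E ** X + P')) - (- (P ** Y ** Y + E ** Y + P'))
     = - (P ** X ** (X - Y) + P ** (X - Y) ** Y + E ** (X - Y))"
    by (simp add: mm_simps algebra_simps)
  also have "norm \<dots> \<le> norm (P ** X ** (X - Y)) + norm (P ** (X - Y) ** Y) + norm (E ** (X - Y))"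
    by (simp only: norm_minus_cancel) (metis norm_triangle_le add_mono order_refl norm_triangle_ineq)
  also have "\<dots> \<le> d * norm X * norm (X - Y) + d * norm (X - Y) * norm Y + d * norm (X - Y)"
  proof -
    have "norm (P ** X ** (X - Y)) \<le> d * norm X * norm (X - Y)"
      by (rule order_trans[OF norm_mm3]) (simp add: assms mult_right_mono)
    moreover have "norm (P ** (X - Y) ** Y) \<le> d * norm (X - Y) * norm Y"
      by (rule order_trans[OF norm_mm3]) (simp add: assms mult_right_mono)
    moreover have "norm (E ** (X - Y)) \<le> d * norm (X - Y)"
      by (rule order_trans[OF norm_mm]) (simp add: assms mult_right_mono)
    ultimately show ?thesis by linarith
  qed
  also have "\<dots> = d * (norm X + norm Y + 1) * norm (X - Y)" by (simp add: algebra_simps)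
  finally show ?thesis .
qed

lemma sol:
  fixes P Q P' :: "complex^'n::finite^'n"
  assumes "norm P \<le> 1 / (4 * (real CARD('n)^2 + 2))" "norm P' \<le> 1 / (4 * (real CARD('n)^2 + 2))"
    "norm (Q - mat 1) \<le> 1 / (4 * (real CARD('n)^2 + 2))"
  shows "\<exists>X. norm X \<le> 1/2 \<and> P ** X ** X + Q ** X + P' = 0 \<and>
     (THE X. opnorm X < 1 \<and> P ** X ** X + Q ** X + P' = 0) = X"
proof -
  define K where "K = real CARD('n)^2"
  define d where "d = 1 / (4 * (K + 2))"
  have c0: "CARD('n) > 0" by simp
  then have "real CARD('n) \<ge> 1" by linarith
  then have K1: "K \<ge> 1" unfolding K_def by (simp add: one_le_power)
  have d0: "d > 0" and d1: "d * (K + 3/2) < 1" and d2: "d \<le> 1/12"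
    unfolding d_def using K1 by (auto simp: field_simps)
  define E where "E = Q - mat 1"
  have P: "norm P \<le> d" and P': "norm P' \<le> d" and E: "norm E \<le> d"
    using assms unfolding d_def K_def E_def by auto
  define F where "F X = - (P ** X ** X + E ** X + P')" for X
  have QE: "Q = E + mat 1" unfolding E_def by simp
  have eqv: "P ** X ** X + Q ** X + P' = 0 \<longleftrightarrow> F X = X" for X
  proof -
    have "P ** X ** X + Q ** X + P' = (P ** X ** X + E ** X + P') + X"
      unfolding QE by (simp add: mm_radd algebra_simps)
    then show ?thesis unfolding F_def by (metis add.commute eq_neg_iff_add_eq_0)
  qed
  have lip: "norm (F X - F Y) \<le> d * (norm X + norm Y + 1) * norm (X - Y)" for X Y
    unfolding F_def by (rule F_lip[OF P E])
  have F0: "norm (F X) \<le> 1/2" if "norm X \<le> 1/2" for X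
  proof -
    have "norm (F X) \<le> norm (P ** X ** X) + norm (E ** X) + norm P'"
      unfolding F_def by (simp only: norm_minus_cancel) (metis norm_triangle_le add_mono order_refl norm_triangle_ineq)
    also have "\<dots> \<le> d * (1/2) * (1/2) + d * (1/2) + d"
    proof -
      have "norm (P ** X ** X) \<le> d * (1/2) * (1/2)"
        by (rule order_trans[OF norm_mm3]) (intro mult_mono, use P that d0 in auto)
      moreover have "norm (E ** X) \<le> d * (1/2)"
        by (rule order_trans[OF norm_mm]) (intro mult_mono, use E that d0 in auto)
      ultimately show ?thesis using P' by linarith
    qed
    also have "\<dots> \<le> 1/2" using d2 by simp
    finally show ?thesis .
  qed
  have "\<exists>!X\<in>cball 0 (1/2). F X = X"
  proof (rule Banach_fix[where c="1/2"])
    show "complete (cball (0::complex^'n^'n) (1/2))" by (simp add: complete_eq_closed)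
    show "F ` cball 0 (1/2) \<subseteq> cball 0 (1/2)" using F0 by auto
    fix X Y :: "complex^'n^'n" assume "X \<in> cball 0 (1/2)" "Y \<in> cball 0 (1/2)"
    then have "norm X + norm Y + 1 \<le> 2" by auto
    then have "d * (norm X + norm Y + 1) * norm (X - Y) \<le> d * 2 * norm (X - Y)"
      by (intro mult_right_mono mult_left_mono) (use d0 in auto)
    also have "\<dots> \<le> 1/2 * norm (X - Y)" using d2 by (intro mult_right_mono) auto
    finally show "dist (F X) (F Y) \<le> 1/2 * dist X Y" using lip[of X Y] by (simp add: dist_norm)
  qed auto
  then obtain X where X: "norm X \<le> 1/2" "F X = X" by auto
  have uniq: "Y = X" if "opnorm Y < 1" "F Y = Y" for Y
  proof -
    have "norm Y \<le> K * opnorm Y" unfolding K_def by (rule norm_le_opnorm)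
    also have "\<dots> \<le> K" using that K1 by simp
    finally have nY: "norm Y \<le> K" .
    have "norm (Y - X) \<le> d * (norm Y + norm X + 1) * norm (Y - X)"
      using lip[of Y X] that X by simp
    also have "\<dots> \<le> d * (K + 3/2) * norm (Y - X)"
      by (intro mult_right_mono mult_left_mono) (use d0 nY X in auto)
    finally have "(1 - d * (K + 3/2)) * norm (Y - X) \<le> 0" by (simp add: algebra_simps)
    then have "norm (Y - X) \<le> 0" using d1 by (simp add: mult_le_0_iff)
    then show ?thesis by simp
  qed
  show ?thesis
  proof (intro exI conjI)
    show "norm X \<le> 1/2" by fact
    show eqX: "P ** X ** X + Q ** X + P' = 0" using eqv X by simp
    show "(THE X. opnorm X < 1 \<and> P ** X ** X + Q ** X + P' = 0) = X"
    proof (rule the_equality)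
      show "opnorm X < 1 \<and> P ** X ** X + Q ** X + P' = 0"
        using opnorm_le[of X] X eqX by simp
    qed (use uniq eqv in auto)
  qed
qed



lemma deriv_from_bound:
  fixes f :: "real \<Rightarrow> 'a::real_normed_vector"
  assumes t0: "t0 > 0" and C: "C \<ge> 0"
    and b: "\<And>t. \<bar>t\<bar> \<le> t0 \<Longrightarrow> norm (f t - f 0 - t *\<^sub>R Y) \<le> C * t^2"
  shows "(f has_vector_derivative Y) (at 0)"
  unfolding has_vector_derivative_def has_derivative_at'
proof (intro conjI allI impI)
  show "bounded_linear (\<lambda>x. x *\<^sub>R Y)" by (rule bounded_linear_scaleR_left)
  fix e :: real assume e: "e > 0"
  show "\<exists>d>0. \<forall>x'. 0 < norm (x' - 0) \<and> norm (x' - 0) < d \<longrightarrow>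
      norm (f x' - f 0 - (x' - 0) *\<^sub>R Y) / norm (x' - 0) < e"
  proof (intro exI conjI allI impI)
    show "min t0 (e / (C + 1)) > 0" using t0 e C by simp
    fix t :: real assume h: "0 < norm (t - 0) \<and> norm (t - 0) < min t0 (e / (C + 1))"
    then have t: "\<bar>t\<bar> > 0" "\<bar>t\<bar> \<le> t0" "\<bar>t\<bar> < e / (C + 1)" by auto
    have "norm (f t - f 0 - t *\<^sub>R Y) / \<bar>t\<bar> \<le> C * t^2 / \<bar>t\<bar>"
      by (rule divide_right_mono[OF b[OF t(2)]]) simp
    also have "C * t^2 / \<bar>t\<bar> = C * \<bar>t\<bar>" using t(1) by (simp add: field_simps power2_eq_square)
    also have "\<dots> \<le> C * (e / (C + 1))" using t C by (intro mult_left_mono) auto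
    also have "\<dots> < e" using e C by (simp add: field_simps)
    finally show "norm (f t - f 0 - (t - 0) *\<^sub>R Y) / norm (t - 0) < e" by simp
  qed
qed

lemma cscale_add: "cscale (x + y) M = cscale x M + cscale y M"
  by (simp add: cscale_def vec_eq_iff distrib_right)
lemma cscale_0[simp]: "cscale 0 M = 0"
  by (simp add: cscale_def vec_eq_iff)
lemma cscale_of_real: "cscale (of_real t) M = t *\<^sub>R M"
  by (simp add: cscale_def vec_eq_iff scaleR_conv_of_real[where 'a=complex])
lemma norm_cscale: "norm (cscale c (M::complex^'n^'m)) = norm c * norm M"
proof -
  have "norm (cscale c M $ i) = norm c * norm (M$i)" for i
    using norm_scale_vec[of c "M$i"] by (simp add: cscale_def)
  then show ?thesis by (simp add: norm_vec_def L2_set_right_distrib)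
qed
lemma adj_add: "adj (M + N) = adj M + adj N" by (simp add: adj_def vec_eq_iff)
lemma adj_0[simp]: "adj 0 = 0" by (simp add: adj_def vec_eq_iff)
lemma adj_scaleR: "adj (r *\<^sub>R M) = r *\<^sub>R adj M" by (simp add: adj_def vec_eq_iff)
lemma adj_sum: "adj (\<Sum>j\<in>S. f j) = (\<Sum>j\<in>S. adj (f j))"
  by (induction S rule: infinite_finite_induct) (auto simp: adj_add)

lemma Pm_shift:
  "Pm A (cvec a0 + (\<chi> j. if j = s then complex_of_real t else 0)) = Pm A (cvec a0) + t *\<^sub>R A s"
proof -
  have "cscale ((cvec a0 + (\<chi> j. if j = s then complex_of_real t else 0)) $ j) (A j)
     = cscale (cvec a0 $ j) (A j) + (if j = s then t *\<^sub>R A j else 0)" for j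
    by (simp add: cscale_add cscale_of_real)
  then show ?thesis by (simp add: Pm_def sum.distrib)
qed

lemma Am_shift:
  "Am A b (cvec a0 + (\<chi> j. if j = s then complex_of_real t else 0)) = Am A b (cvec a0) - (2*t) *\<^sub>R A s"
proof -
  have "cscale (complex_of_real (b $ j) - (cvec a0 + (\<chi> j. if j = s then complex_of_real t else 0)) $ j
          - cnj ((cvec a0 + (\<chi> j. if j = s then complex_of_real t else 0)) $ j)) (A j)
     = cscale (complex_of_real (b $ j) - cvec a0 $ j - cnj (cvec a0 $ j)) (A j)
        + (if j = s then (-(2*t)) *\<^sub>R A j else 0)" for j
  proof -
    have "complex_of_real (b $ j) - (cvec a0 + (\<chi> j. if j = s then complex_of_real t else 0)) $ j
          - cnj ((cvec a0 + (\<chi> j. if j = s then complex_of_real t else 0)) $ j)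
        = (complex_of_real (b $ j) - cvec a0 $ j - cnj (cvec a0 $ j))
          + (if j = s then complex_of_real (-(2*t)) else 0)" (is "?l = ?r") by simp
    show ?thesis unfolding \<open>?l = ?r\<close> cscale_add by (cases "j = s") (simp_all add: cscale_def vec_eq_iff scaleR_conv_of_real[where 'a=complex])
  qed
  then show ?thesis by (simp add: Am_def sum.distrib)
qed

lemma adj_Pm_real:
  assumes herm: "\<And>j. hermitian (A j)"
  shows "adj (Pm A (cvec r)) = Pm A (cvec r)"
  using herm by (simp add: Pm_def adj_sum cvec_def cscale_of_real adj_scaleR hermitian_def)

lemma norm_Pm_real:
  "norm (Pm A (cvec (r::real^'d))) \<le> norm r * (\<Sum>j\<in>UNIV. norm (A j))"
proof -
  have "norm (Pm A (cvec r)) \<le> (\<Sum>j\<in>UNIV. norm (cscale (cvec r $ j) (A j)))"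
    unfolding Pm_def by (rule norm_sum)
  also have "\<dots> \<le> (\<Sum>j\<in>UNIV. norm r * norm (A j))"
    by (rule sum_mono) (simp add: norm_cscale cvec_def mult_right_mono component_le_norm_cart)
  finally show ?thesis by (simp add: sum_distrib_left)
qed

lemma phi_props:
  fixes P X :: "complex^'n::finite^'n"
  assumes "norm P * norm X \<le> 1/4"
  shows "\<And>N. norm (P ** (N ** X + X ** N)) \<le> 1/2 * norm N"
    and "\<And>N. norm N \<le> 2 * norm (N + P ** (N ** X + X ** N))"
    and "bij (\<lambda>N. N + P ** (N ** X + X ** N))"
proof -
  have nP: "norm P \<ge> 0" "norm X \<ge> 0" by auto
  show b: "norm (P ** (N ** X + X ** N)) \<le> 1/2 * norm N" for N
  proof -
    have "norm (P ** (N ** X + X ** N)) \<le> norm P * (norm (N ** X) + norm (X ** N))"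
      by (rule order_trans[OF norm_mm]) (simp add: mult_left_mono norm_triangle_ineq)
    also have "\<dots> \<le> norm P * (2 * norm X * norm N)"
      using norm_mm[of N X] norm_mm[of X N] by (intro mult_left_mono) (auto simp: mult_ac)
    also have "\<dots> = 2 * (norm P * norm X) * norm N" by (simp add: mult_ac)
    also have "\<dots> \<le> 2 * (1/4) * norm N" using assms by (intro mult_right_mono) auto
    finally show ?thesis by simp
  qed
  show lo: "norm N \<le> 2 * norm (N + P ** (N ** X + X ** N))" for N
  proof -
    have "norm N \<le> norm (N + P ** (N ** X + X ** N)) + norm (P ** (N ** X + X ** N))"
      by (metis add_diff_cancel norm_triangle_ineq4 diff_add_cancel norm_minus_commute norm_triangle_sub)
    then show ?thesis using b[of N] by simp
  qed
  define \<phi> where "\<phi> N = N + P ** (N ** X + X ** N)" for N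
  have lin: "\<phi> N - \<phi> M = \<phi> (N - M)" for N M
    unfolding \<phi>_def by (simp add: mm_simps algebra_simps)
  have "inj \<phi>"
  proof (rule injI)
    fix N M assume "\<phi> N = \<phi> M"
    then have "\<phi> (N - M) = 0" using lin[of N M] by simp
    then have "norm (N - M) \<le> 0" using lo[of "N - M"] unfolding \<phi>_def by simp
    then show "N = M" by simp
  qed
  moreover have "surj \<phi>"
  proof -
    have "\<exists>N. \<phi> N = M" for M
    proof -
      define G where "G N = M - P ** (N ** X + X ** N)" for N
      have "\<exists>!N. G N = N"
      proof (rule banach_fix_type[where c="1/2"])
        show "\<forall>N N'. dist (G N) (G N') \<le> 1/2 * dist N N'"
        proof (intro allI)
          fix N N' :: "complex^'n^'n"
          have "G N - G N' = - (P ** ((N - N') ** X + X ** (N - N')))"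
            unfolding G_def by (simp add: mm_simps algebra_simps)
          then show "dist (G N) (G N') \<le> 1/2 * dist N N'"
            using b[of "N - N'"] by (simp add: dist_norm)
        qed
      qed auto
      then obtain N where "G N = N" by auto
      then have "\<phi> N = M" unfolding G_def \<phi>_def by (metis add.commute diff_add_cancel)
      then show ?thesis by blast
    qed
    then show ?thesis by (metis surjI)
  qed
  ultimately show "bij (\<lambda>N. N + P ** (N ** X + X ** N))" unfolding \<phi>_def[abs_def] by (simp add: bij_def)
qed


lemma mult2_mat: "(M::complex^'n^'m) * 2 = 2 *\<^sub>R M"
  by (simp add: vec_eq_iff scaleR_conv_of_real[where 'a=complex] mult.commute)

lemma mult2_mat': "2 * (M::complex^'n^'m) = 2 *\<^sub>R M"
  by (simp add: vec_eq_iff scaleR_conv_of_real[where 'a=complex])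

lemma lin_aux: "(x::real) \<le> 2 * (1/24 * x + q) \<Longrightarrow> c = 3 * q \<Longrightarrow> 0 \<le> q \<Longrightarrow> x \<le> c"
  by (simp only: distrib_left, linarith?)

theorem lemma4p1:
  fixes A :: "'d::finite \<Rightarrow> complex^'n^'n" and b :: "real^'d"
  assumes herm: "\<And>j. hermitian (A j)"
    and spc: "strongly_pseudoconvex A"
    and binv: "invertible (\<Sum>j\<in>UNIV. cscale (complex_of_real (b $ j)) (A j))"
  shows "\<exists>\<epsilon>>0. \<forall>a0::real^'d. norm a0 < \<epsilon> \<longrightarrow> Am A b (cvec a0) = mat 1 \<longrightarrow>
     (let P = Pm A (cvec a0); X = Xsol A b (cvec a0);
          \<phi> = (\<lambda>N::complex^'n^'n. N + P ** (N ** X + X ** N));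
          IX2 = (mat 1 - X) ** (mat 1 - X)
      in bij \<phi> \<and>
         (\<forall>s::'d.
            ((\<lambda>t::real. Xsol A b (cvec a0 + (\<chi> j. if j = s then complex_of_real t else 0)))
               has_vector_derivative inv \<phi> (- (A s ** IX2))) (at 0)
          \<and> inv \<phi> (- (A s ** IX2)) = - (inv \<phi> (A s) ** IX2)))"
proof -
  define d :: real where "d = 1 / (4 * (real CARD('n)^2 + 2))"
  have "CARD('n) > 0" by simp
  then have "real CARD('n) \<ge> 1" by linarith
  then have "real CARD('n)^2 \<ge> 1" by (simp add: one_le_power)
  then have q: "4 * (real CARD('n)^2 + 2) \<ge> 12" by (simp add: algebra_simps)
  then have pos: "4 * (real CARD('n)^2 + 2) > 0" by linarith
  then have d0: "d > 0" unfolding d_def by (rule divide_pos_pos[rotated]) simp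
  have d12: "d \<le> 1/12" unfolding d_def using q pos by (intro divide_left_mono) (auto intro: mult_pos_pos)
  define CA where "CA = (\<Sum>j\<in>UNIV. norm (A j))"
  have CA0: "CA \<ge> 0" unfolding CA_def by (simp add: sum_nonneg)
  define \<epsilon> where "\<epsilon> = d / (2 * (CA + 1))"
  have e0: "\<epsilon> > 0" unfolding \<epsilon>_def using d0 CA0 by simp
  have eCA: "\<epsilon> * CA \<le> d / 2" unfolding \<epsilon>_def using d0 CA0 by (simp add: field_simps)
  define m :: real where "m = norm (mat 1 :: complex^'n^'n) + 1/2"
  have m0: "m \<ge> 0" unfolding m_def by simp
  have nIX: "norm (mat 1 - Z) \<le> m" if "norm Z \<le> 1/2" for Z :: "complex^'n^'n"
    using norm_triangle_ineq4[of "mat 1" Z] that unfolding m_def by linarith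
  show ?thesis
  proof (intro exI[of _ \<epsilon>] conjI allI impI)
    show "\<epsilon> > 0" by fact
    fix a0 :: "real^'d" assume na: "norm a0 < \<epsilon>" and Am1: "Am A b (cvec a0) = mat 1"
    define P where "P = Pm A (cvec a0)"
    have "norm P \<le> norm a0 * CA" unfolding P_def CA_def by (rule norm_Pm_real)
    also have "\<dots> \<le> \<epsilon> * CA" using na CA0 by (intro mult_right_mono) auto
    finally have nP: "norm P \<le> d / 2" using eCA by linarith
    have hP: "adj P = P" unfolding P_def by (rule adj_Pm_real[OF herm])
    have "norm P \<le> d" "norm (mat 1 - mat 1 :: complex^'n^'n) \<le> d" using nP d0 by auto
    then obtain X where X: "norm X \<le> 1/2" "P ** X ** X + mat 1 ** X + P = 0"
       and XT: "(THE X. opnorm X < 1 \<and> P ** X ** X + mat 1 ** X + P = 0) = X"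
      using sol[of P P "mat 1"] unfolding d_def by blast
    have XX: "Xsol A b (cvec a0) = X"
      unfolding Xsol_def Am1 P_def[symmetric] hP using XT .
    define \<phi> where "\<phi> = (\<lambda>N::complex^'n^'n. N + P ** (N ** X + X ** N))"
    have "norm P * norm X \<le> (d/2) * (1/2)" using nP X(1) d0 by (intro mult_mono) auto
    then have PX: "norm P * norm X \<le> 1/4" using d12 by simp
    note phi = phi_props[OF PX, folded \<phi>_def]
    have phi_lin: "\<phi> (N - M) = \<phi> N - \<phi> M" for N M
      unfolding \<phi>_def by (simp add: mm_simps algebra_simps)
    have phi_lo: "norm N \<le> 2 * norm (\<phi> N)" for N unfolding \<phi>_def by (rule phi(2))
    have phi_inv: "\<phi> (inv \<phi> M) = M" for M using phi(3) by (simp add: bij_is_surj surj_f_inv_f)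
    have inv_phi: "inv \<phi> (\<phi> N) = N" for N using phi(3) by (simp add: bij_is_inj)
    define W where "W = (mat 1 - X) ** (mat 1 - X)"
    have main: "((\<lambda>t::real. Xsol A b (cvec a0 + (\<chi> j. if j = s then complex_of_real t else 0)))
               has_vector_derivative inv \<phi> (- (A s ** W))) (at 0)
          \<and> inv \<phi> (- (A s ** W)) = - (inv \<phi> (A s) ** W)" for s
    proof
      show "inv \<phi> (- (A s ** W)) = - (inv \<phi> (A s) ** W)"
      proof -
        define Z where "Z = inv \<phi> (A s)"
        have "\<phi> (- (Z ** W)) = - (\<phi> Z ** W)"
          unfolding \<phi>_def W_def by (simp add: mm_simps algebra_simps mult2_mat mult2_mat')
        then have "\<phi> (- (Z ** W)) = - (A s ** W)" unfolding Z_def phi_inv .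
        then show ?thesis using inv_phi unfolding Z_def by metis
      qed
      show "((\<lambda>t::real. Xsol A b (cvec a0 + (\<chi> j. if j = s then complex_of_real t else 0)))
               has_vector_derivative inv \<phi> (- (A s ** W))) (at 0)"
      proof -
        define f where "f t = Xsol A b (cvec a0 + (\<chi> j. if j = s then complex_of_real t else 0))" for t
        define a where "a = norm (A s)"
        have a0': "a \<ge> 0" unfolding a_def by simp
        define t0 where "t0 = d / (4 * (a + 1))"
        have t00: "t0 > 0" unfolding t0_def using d0 a0' by simp
        have ft: "norm (f t) \<le> 1/2 \<and> (P + t *\<^sub>R A s) ** f t ** f t
             + (mat 1 - (2*t) *\<^sub>R A s) ** f t + (P + t *\<^sub>R A s) = 0" if t: "\<bar>t\<bar> \<le> t0" for t
        proof -
          have "\<bar>t\<bar> * a \<le> t0 * a" using t a0' by (intro mult_right_mono) auto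
          also have "t0 * a \<le> d / 4" unfolding t0_def using d0 a0' by (simp add: field_simps)
          finally have ta: "\<bar>t\<bar> * a \<le> d / 4" .
          have "norm (P + t *\<^sub>R A s) \<le> norm P + \<bar>t\<bar> * a"
            unfolding a_def by (rule order_trans[OF norm_triangle_ineq]) simp
          then have n1: "norm (P + t *\<^sub>R A s) \<le> d" using nP ta d0 by linarith
          have n2: "norm ((mat 1 - (2*t) *\<^sub>R A s) - mat 1) \<le> d"
            using ta d0 by (simp add: a_def)
          have hA: "adj (A s) = A s" using herm by (simp add: hermitian_def)
          have adjt: "adj (P + t *\<^sub>R A s) = P + t *\<^sub>R A s" by (simp add: adj_add adj_scaleR hP hA)
          obtain Y where Y: "norm Y \<le> 1/2" "(P + t *\<^sub>R A s) ** Y ** Y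
             + (mat 1 - (2*t) *\<^sub>R A s) ** Y + (P + t *\<^sub>R A s) = 0"
            and YT: "(THE X. opnorm X < 1 \<and> (P + t *\<^sub>R A s) ** X ** X
             + (mat 1 - (2*t) *\<^sub>R A s) ** X + (P + t *\<^sub>R A s) = 0) = Y"
            using sol[of "P + t *\<^sub>R A s" "P + t *\<^sub>R A s" "mat 1 - (2*t) *\<^sub>R A s"] n1 n2
            unfolding d_def by blast
          have "f t = Y"
            unfolding f_def Xsol_def Pm_shift Am_shift Am1 P_def[symmetric] adjt using YT .
          then show ?thesis using Y by simp
        qed
        have f0: "f 0 = X"
        proof -
          have "(\<chi> j. if j = s then complex_of_real 0 else 0) = 0" by (simp add: vec_eq_iff)
          then show ?thesis unfolding f_def using XX by simp
        qed
        define Y where "Y = inv \<phi> (- (A s ** W))"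
        have phiY: "\<phi> Y = - (A s ** W)" unfolding Y_def by (rule phi_inv)
        define C1 where "C1 = 3 * a * (m * m)"
        define C2 where "C2 = 2 * (C1 * C1 + a * (1 + 2 * m) * C1)"
        have C10: "C1 \<ge> 0" unfolding C1_def using a0' m0 by simp
        have C20: "C2 \<ge> 0" unfolding C2_def using a0' m0 C10 by simp
        have bound: "norm (f t - f 0 - t *\<^sub>R Y) \<le> C2 * t^2" if t: "\<bar>t\<bar> \<le> t0" for t
        proof -
          define Xt where "Xt = f t"
          have Xt: "norm Xt \<le> 1/2" "(P + t *\<^sub>R A s) ** Xt ** Xt
             + (mat 1 - (2*t) *\<^sub>R A s) ** Xt + (P + t *\<^sub>R A s) = 0"
            using ft[OF t] unfolding Xt_def by auto
          define D where "D = Xt - X"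
          define Wt where "Wt = (mat 1 - Xt) ** (mat 1 - Xt)"
          have id1: "\<phi> D + P ** D ** D + t *\<^sub>R (A s ** Wt)
             = ((P + t *\<^sub>R A s) ** Xt ** Xt + (mat 1 - (2*t) *\<^sub>R A s) ** Xt + (P + t *\<^sub>R A s))
               - (P ** X ** X + mat 1 ** X + P)"
            unfolding \<phi>_def D_def Wt_def by (simp add: mm_simps algebra_simps mult2_mat mult2_mat')
          then have "\<phi> D + (P ** D ** D + t *\<^sub>R (A s ** Wt)) = 0"
            unfolding Xt(2) X(2) by (simp add: add.assoc)
          then have id1': "\<phi> D = - (P ** D ** D + t *\<^sub>R (A s ** Wt))"
            by (simp only: eq_neg_iff_add_eq_0)
          define nD where "nD = norm D"
          have nD0: "nD \<ge> 0" unfolding nD_def by simp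
          have nD1: "nD \<le> 1" unfolding nD_def D_def
            using norm_triangle_ineq4[of Xt X] Xt(1) X(1) by linarith
          have nDD: "nD * nD \<le> nD" using nD0 nD1 by (simp add: mult_left_le)
          have "norm P * (nD * nD) \<le> (d/2) * (nD * nD)"
            by (rule mult_right_mono[OF nP]) (use nD0 in simp)
          then have nPDD: "norm (P ** D ** D) \<le> (d/2) * (nD * nD)"
            using norm_mm3[of P D D] unfolding nD_def by (simp add: mult.assoc)
          have "(d/2) * (nD * nD) \<le> 1 * (nD * nD)"
            by (rule mult_right_mono) (use d12 nD0 in auto)
          then have nPDD1: "norm (P ** D ** D) \<le> nD * nD" using nPDD by linarith
          have "(d/2) * (nD * nD) \<le> (1/24) * nD"
            using nDD d12 d0 nD0 by (intro mult_mono) auto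
          with nPDD have nPDD2: "norm (P ** D ** D) \<le> (1/24) * nD" by linarith
          have nWt: "norm Wt \<le> m * m" unfolding Wt_def
            using norm_mm[of "mat 1 - Xt" "mat 1 - Xt"]
              mult_mono[OF nIX[OF Xt(1)] nIX[OF Xt(1)] m0 norm_ge_zero] by linarith
          have nAWt: "norm (t *\<^sub>R (A s ** Wt)) \<le> \<bar>t\<bar> * (a * (m * m))"
          proof -
            have "norm (A s ** Wt) \<le> a * (m * m)" unfolding a_def
              using norm_mm[of "A s" Wt] nWt by (meson mult_left_mono norm_ge_zero order_trans)
            then show ?thesis by (simp add: mult_left_mono)
          qed
          have h1: "nD \<le> 2 * norm (\<phi> D)" unfolding nD_def by (rule phi_lo)
          have h2: "norm (\<phi> D) \<le> norm (P ** D ** D) + norm (t *\<^sub>R (A s ** Wt))"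
            unfolding id1' norm_minus_cancel by (rule norm_triangle_ineq)
          have "nD \<le> 2 * ((1/24) * nD + \<bar>t\<bar> * (a * (m * m)))"
            using h1 h2 nPDD2 nAWt by (simp only: distrib_left, linarith?)
          moreover have "C1 * \<bar>t\<bar> = 3 * (\<bar>t\<bar> * (a * (m * m)))" by (simp add: C1_def mult_ac)
          moreover have "\<bar>t\<bar> * (a * (m * m)) \<ge> 0" using a0' by simp
          ultimately have nDt: "nD \<le> C1 * \<bar>t\<bar>" by (rule lin_aux)
          define R where "R = D - t *\<^sub>R Y"
          define V where "V = D ** D - D ** (mat 1 - X) - (mat 1 - X) ** D"
          have id2: "\<phi> R + (P ** D ** D + t *\<^sub>R (A s ** V))
             = (((P + t *\<^sub>R A s) ** Xt ** Xt + (mat 1 - (2*t) *\<^sub>R A s) ** Xt + (P + t *\<^sub>R A s))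
               - (P ** X ** X + mat 1 ** X + P)) - t *\<^sub>R (\<phi> Y + A s ** W)"
            unfolding \<phi>_def R_def D_def V_def W_def by (simp add: mm_simps algebra_simps mult2_mat mult2_mat')
          have "\<phi> Y + A s ** W = 0" using phiY by simp
          then have "\<phi> R + (P ** D ** D + t *\<^sub>R (A s ** V)) = 0"
            using id2 unfolding Xt(2) X(2) by simp
          then have id2': "\<phi> R = - (P ** D ** D + t *\<^sub>R (A s ** V))"
            by (simp only: eq_neg_iff_add_eq_0)
          have nV: "norm V \<le> nD * (1 + 2 * m)"
          proof -
            have "norm V \<le> norm (D ** D) + norm (D ** (mat 1 - X)) + norm ((mat 1 - X) ** D)"
              unfolding V_def using norm_triangle_ineq4[of "D ** D - D ** (mat 1 - X)" "(mat 1 - X) ** D"]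
                norm_triangle_ineq4[of "D ** D" "D ** (mat 1 - X)"] by linarith
            also have "\<dots> \<le> nD * nD + nD * m + m * nD"
              using norm_mm[of D D] norm_mm[of D "mat 1 - X"] norm_mm[of "mat 1 - X" D]
                mult_left_mono[OF nIX[OF X(1)] nD0] mult_right_mono[OF nIX[OF X(1)] nD0]
              unfolding nD_def by linarith
            also have "\<dots> \<le> nD * (1 + 2 * m)" using nDD by (simp add: algebra_simps)
            finally show ?thesis .
          qed
          have nR: "norm R \<le> 2 * (nD * nD + \<bar>t\<bar> * (a * (nD * (1 + 2 * m))))"
          proof -
            have "norm (A s ** V) \<le> a * (nD * (1 + 2 * m))" unfolding a_def
              using norm_mm[of "A s" V] nV by (meson mult_left_mono norm_ge_zero order_trans)
            then have "norm (t *\<^sub>R (A s ** V)) \<le> \<bar>t\<bar> * (a * (nD * (1 + 2 * m)))"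
              by (simp add: mult_left_mono)
            moreover have "norm (\<phi> R) \<le> norm (P ** D ** D) + norm (t *\<^sub>R (A s ** V))"
              unfolding id2' norm_minus_cancel by (rule norm_triangle_ineq)
            moreover have "norm R \<le> 2 * norm (\<phi> R)" by (rule phi_lo)
            ultimately show ?thesis using nPDD1 by (simp only: distrib_left, linarith?)
          qed
          have C1t: "C1 * \<bar>t\<bar> \<ge> 0" using C10 by simp
          have q1: "nD * nD \<le> (C1 * \<bar>t\<bar>) * (C1 * \<bar>t\<bar>)"
            using nDt nD0 C1t by (intro mult_mono) auto
          have q2: "\<bar>t\<bar> * (a * (nD * (1 + 2 * m))) \<le> \<bar>t\<bar> * (a * ((C1 * \<bar>t\<bar>) * (1 + 2 * m)))"
            using nDt a0' m0 by (intro mult_left_mono mult_right_mono) auto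
          have e1: "(C1 * \<bar>t\<bar>) * (C1 * \<bar>t\<bar>) = C1 * C1 * t^2" by (simp add: power2_eq_square mult_ac)
          have e2: "\<bar>t\<bar> * (a * ((C1 * \<bar>t\<bar>) * (1 + 2 * m))) = a * (1 + 2 * m) * C1 * t^2"
            by (simp add: power2_eq_square mult_ac)
          have e3: "C2 * t^2 = 2 * (C1 * C1 * t^2 + a * (1 + 2 * m) * C1 * t^2)"
            by (simp add: C2_def algebra_simps)
          have "norm R \<le> C2 * t^2" using nR q1 q2 e1 e2 e3 by (simp only: distrib_left, linarith?)
          moreover have "f t - f 0 - t *\<^sub>R Y = R" unfolding R_def D_def Xt_def f0 ..
          ultimately show ?thesis by simp
        qed
        show ?thesis
          using deriv_from_bound[OF t00 C20 bound] unfolding f_def Y_def .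
      qed
    qed
    show "let P = Pm A (cvec a0); X = Xsol A b (cvec a0);
          \<phi> = (\<lambda>N::complex^'n^'n. N + P ** (N ** X + X ** N));
          IX2 = (mat 1 - X) ** (mat 1 - X)
      in bij \<phi> \<and>
         (\<forall>s::'d.
            ((\<lambda>t::real. Xsol A b (cvec a0 + (\<chi> j. if j = s then complex_of_real t else 0)))
               has_vector_derivative inv \<phi> (- (A s ** IX2))) (at 0)
          \<and> inv \<phi> (- (A s ** IX2)) = - (inv \<phi> (A s) ** IX2))"
      unfolding Let_def P_def[symmetric] XX \<phi>_def[symmetric] W_def[symmetric]
      using phi(3) main by blast
  qed
qed

end
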